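(* Let $r\ge2$, $\ell\ge1$, and let $C=(w_1,\dots,w_{2\ell+1})$ be a semi-valid tuple in $\Omega_n$ with $|[w_i,w_{i-1}]|\ge r$ for all $i$ (indices mod $2\ell+1$). Then $H_n^{(r)}(C)$ is $M_1^{(r)}$-saturated.
   Context: $\Omega_n=\{v_0,\dots,v_{n-1}\}$ with cyclic order $v_0<\dots<v_{n-1}<v_0$. For distinct vertices $u,w$, $(u,w)$ is the set of vertices strictly between $u$ and $w$ moving clockwise from $u$ to $w$, and $[u,w]=(u,w)\cup\{u,w\}$. A tuple of distinct vertices $C=(w_1,\dots,w_{2\ell+1})$ is semi-valid if $w_1<w_3<\dots<w_{2\ell+1}<w_2<w_4<\dots<w_{2\ell}<w_1$ in clockwise cyclic order. $H_n^{(r)}(C)=\{e\in\binom{\Omega_n}{r}: e\cap[w_i,w_{i-1}]\neq\emptyset\ \forall i\}$. $M_1^{(r)}$ is the $r$-cgh consisting of two geometrically disjoint edges $\{v_0,\dots,v_{r-1}\},\{v_r,\dots,v_{2r-1}\}$; an $r$-cgh $H$ on $\Omega_n$ contains a copy of it iff there are edges $h_1,h_2\in H$ and vertices $u\neq u'$ with $h_1\subseteq[u,u']$, $h_2\cap[u,u']=\emptyset$. $H$ is $M_1^{(r)}$-saturated if it contains no copy, but $H\cup\{e\}$ contains one for every $e\in\binom{\Omega_n}{r}\setminus H$. *)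

theory Defs
  imports Main
begin

text \<open>The vertex set Omega_n is modelled as {0..<n}, with v_i = i and clockwise
order given by increasing index modulo n.\<close>

definition Omega :: "nat \<Rightarrow> nat set" where
  "Omega n = {0..<n}"

definition cyc_open :: "nat \<Rightarrow> nat \<Rightarrow> nat \<Rightarrow> nat set" where
  "cyc_open n u w = {v \<in> Omega n. 0 < (v + n - u) mod n \<and> (v + n - u) mod n < (w + n - u) mod n}"

definition cyc_closed :: "nat \<Rightarrow> nat \<Rightarrow> nat \<Rightarrow> nat set" where
  "cyc_closed n u w = cyc_open n u w \<union> {u, w}"

definition cyc_ordered :: "nat list \<Rightarrow> bool" where
  "cyc_ordered xs \<longleftrightarrow> (\<exists>k. sorted_wrt (<) (rotate k xs))"

text \<open>A tuple C = (w_1,...,w_{2l+1}) is stored as a list with C!(i-1) = w_i.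
Semi-valid: distinct vertices with w_1 < w_3 < ... < w_{2l+1} < w_2 < w_4 < ... < w_{2l} < w_1.\<close>
definition semi_valid :: "nat \<Rightarrow> nat list \<Rightarrow> bool" where
  "semi_valid n C \<longleftrightarrow> odd (length C) \<and> length C \<ge> 3 \<and> distinct C \<and> set C \<subseteq> Omega n \<and>
     cyc_ordered (map (\<lambda>j. C ! j) ([j\<leftarrow>[0..<length C]. even j] @ [j\<leftarrow>[0..<length C]. odd j]))"

text \<open>The set [w_i, w_{i-1}] with indices mod 2l+1, for 0-based list index j
(so w_{i} = C!j with j = i-1, and w_{i-1} = C!((j + m - 1) mod m)).\<close>
definition seg :: "nat \<Rightarrow> nat list \<Rightarrow> nat \<Rightarrow> nat set" where
  "seg n C j = cyc_closed n (C ! j) (C ! ((j + length C - 1) mod length C))"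

definition H_C :: "nat \<Rightarrow> nat \<Rightarrow> nat list \<Rightarrow> nat set set" where
  "H_C n r C = {e. e \<subseteq> Omega n \<and> card e = r \<and> (\<forall>j < length C. e \<inter> seg n C j \<noteq> {})}"

definition contains_M1 :: "nat \<Rightarrow> nat set set \<Rightarrow> bool" where
  "contains_M1 n H \<longleftrightarrow> (\<exists>h1\<in>H. \<exists>h2\<in>H. \<exists>u\<in>Omega n. \<exists>u'\<in>Omega n. u \<noteq> u' \<and>
      h1 \<subseteq> cyc_closed n u u' \<and> h2 \<inter> cyc_closed n u u' = {})"

definition M1_saturated :: "nat \<Rightarrow> nat \<Rightarrow> nat set set \<Rightarrow> bool" where
  "M1_saturated n r H \<longleftrightarrow> H \<subseteq> {e. e \<subseteq> Omega n \<and> card e = r} \<and> \<not> contains_M1 n H \<and>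
     (\<forall>e. e \<subseteq> Omega n \<and> card e = r \<and> e \<notin> H \<longrightarrow> contains_M1 n (insert e H))"

end

theory Submission
  imports Defs
begin

lemma mod_lt2: "(x::nat) < 2*n \<Longrightarrow> x mod n = (if x < n then x else x - n)"
  apply (cases "x < n") apply simp
  by (metis add_diff_inverse_nat less_diff_conv2 mod_add_self1 mod_less mult_2 not_less)

lemma cc_mem:
  fixes a b n v :: nat
  assumes "a < n" "b < n"
  shows "v \<in> cyc_closed n a b \<longleftrightarrow> v < n \<and> (if a \<le> b then a \<le> v \<and> v \<le> b else (a \<le> v \<or> v \<le> b))"
proof -
  have e1: "(v + n - a) mod n = (if v < a then v + n - a else v - a)" if "v < n"
  proof -
    have "v + n - a < 2*n" using assms that by linarith
    from mod_lt2[OF this] show ?thesis using assms that by auto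
  qed
  have e2: "(b + n - a) mod n = (if b < a then b + n - a else b - a)"
  proof -
    have "b + n - a < 2*n" using assms by linarith
    from mod_lt2[OF this] show ?thesis using assms by auto
  qed
  have d: "v \<in> cyc_closed n a b \<longleftrightarrow> v = a \<or> v = b \<or> (v < n \<and> 0 < (v + n - a) mod n \<and> (v + n - a) mod n < (b + n - a) mod n)"
    unfolding cyc_closed_def cyc_open_def Omega_def by auto
  show ?thesis
  proof (cases "v < n")
    case True
    show ?thesis unfolding d e1[OF True] e2 using assms True
      by (cases "a \<le> b"; cases "v < a"; cases "b < a"; simp; linarith)
  next
    case False
    then show ?thesis unfolding d using assms by auto
  qed
qed

lemma cc_lin:
  fixes a b n :: nat
  assumes "a < n" "b < n"
  shows "cyc_closed n a b = (if a \<le> b then {a..b} else {v. v < n \<and> (a \<le> v \<or> v \<le> b)})"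
proof (cases "a \<le> b")
  case True
  show ?thesis using True assms by (auto simp: cc_mem[OF assms])
next
  case False
  show ?thesis using False by (auto simp: cc_mem[OF assms])
qed

locale arcs =
  fixes n l :: nat and q :: "nat \<Rightarrow> nat"
  assumes l1: "l \<ge> 1"
    and mono: "\<And>i j. i < j \<Longrightarrow> j < 2*l+1 \<Longrightarrow> q i < q j"
    and bnd: "\<And>i. i < 2*l+1 \<Longrightarrow> q i < n"
begin

definition A :: "nat \<Rightarrow> nat set" where
  "A p = cyc_closed n (q p) (q ((p+l) mod (2*l+1)))"

lemma q_less_iff: "i < 2*l+1 \<Longrightarrow> j < 2*l+1 \<Longrightarrow> q i < q j \<longleftrightarrow> i < j"
  by (metis mono not_less_iff_gr_or_eq order_less_asym)

lemma q_le_iff: "i < 2*l+1 \<Longrightarrow> j < 2*l+1 \<Longrightarrow> q i \<le> q j \<longleftrightarrow> i \<le> j"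
  by (meson not_le q_less_iff)

lemma A_low: assumes "p \<le> l" shows "A p = {q p .. q (p+l)}"
proof -
  have "(p+l) mod (2*l+1) = p + l" using assms by simp
  moreover have "q p \<le> q (p+l)" using assms q_le_iff by simp
  ultimately show ?thesis unfolding A_def using assms bnd by (simp add: cc_lin)
qed

lemma A_high: assumes "l < p" "p < 2*l+1" shows "A p = {v. v < n \<and> (q p \<le> v \<or> v \<le> q (p-l-1))}"
proof -
  have "(p+l) mod (2*l+1) = p - l - 1" using assms by (simp add: mod_lt2)
  moreover have "\<not> q p \<le> q (p-l-1)" using assms q_le_iff by simp
  ultimately show ?thesis unfolding A_def using assms bnd by (simp add: cc_lin)
qed

lemma A_sub: "p < 2*l+1 \<Longrightarrow> A p \<subseteq> Omega n"
  unfolding A_def cyc_closed_def cyc_open_def Omega_def using bnd by auto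

lemma mem: assumes "i < 2*l+1" "j < 2*l+1"
  shows "q i \<in> A j \<longleftrightarrow> (if j \<le> i then i - j \<le> l else i + (2*l+1) - j \<le> l)"
proof (cases "j \<le> l")
  case True
  then show ?thesis using assms by (auto simp: A_low q_le_iff)
next
  case False
  then show ?thesis using assms bnd by (auto simp: A_high q_le_iff)
qed

lemma two: assumes "p < 2*l+1" "j < 2*l+1"
  shows "q p \<in> A j \<or> q ((p+l) mod (2*l+1)) \<in> A j"
proof (cases "p + l < 2*l+1")
  case True
  then have e: "(p+l) mod (2*l+1) = p + l" by simp
  have m1: "q p \<in> A j \<longleftrightarrow> (if j \<le> p then p - j \<le> l else p + (2*l+1) - j \<le> l)"
    using mem assms by blast
  have m2: "q (p+l) \<in> A j \<longleftrightarrow> (if j \<le> p+l then p+l - j \<le> l else p+l + (2*l+1) - j \<le> l)"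
    using mem assms True by blast
  show ?thesis unfolding e m1 m2 using True assms by (simp split: if_splits; arith)
next
  case False
  then have e: "(p+l) mod (2*l+1) = p - l - 1" using assms by (simp add: mod_lt2)
  have m1: "q p \<in> A j \<longleftrightarrow> (if j \<le> p then p - j \<le> l else p + (2*l+1) - j \<le> l)"
    using mem assms by blast
  have m2: "q (p-l-1) \<in> A j \<longleftrightarrow> (if j \<le> p-l-1 then p-l-1 - j \<le> l else p-l-1 + (2*l+1) - j \<le> l)"
    using mem assms False by (meson less_imp_diff_less)
  show ?thesis unfolding e m1 m2 using False assms by (simp split: if_splits; arith)
qed

lemma cut: "\<exists>c \<le> 2*l+1. \<forall>i < 2*l+1. q i < a \<longleftrightarrow> i < c"
proof -
  have "\<forall>k \<le> 2*l+1. \<exists>c \<le> k. \<forall>i < k. q i < a \<longleftrightarrow> i < c"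
  proof (intro allI impI)
    fix k assume "k \<le> 2*l+1"
    then show "\<exists>c \<le> k. \<forall>i < k. q i < a \<longleftrightarrow> i < c"
    proof (induction k)
      case 0 then show ?case by auto
    next
      case (Suc k)
      then obtain c where c: "c \<le> k" "\<forall>i < k. q i < a \<longleftrightarrow> i < c" by auto
      show ?case
      proof (cases "q k < a")
        case True
        have "\<forall>i < Suc k. q i < a"
        proof (intro allI impI)
          fix i assume "i < Suc k"
          then have "i = k \<or> i < k" by auto
          then show "q i < a"
          proof
            assume "i < k"
            then have "q i < q k" using mono Suc.prems by simp
            then show ?thesis using True by simp
          qed (use True in simp)
        qed
        then show ?thesis by (intro exI[of _ "Suc k"]) auto
      next
        case False
        then show ?thesis using c by (intro exI[of _ c]) (auto simp: less_Suc_eq)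
      qed
    qed
  qed
  then show ?thesis by auto
qed

lemma K:
  assumes ab: "a \<le> b" "b < n"
    and all: "\<forall>p<2*l+1. {a..b} \<inter> A p \<noteq> {} \<and> {v. v < n \<and> (v < a \<or> b < v)} \<inter> A p \<noteq> {}"
  shows False
proof -
  obtain c where c: "c \<le> 2*l+1" "\<forall>i<2*l+1. q i < a \<longleftrightarrow> i < c" using cut by blast
  obtain d where d: "d \<le> 2*l+1" "\<forall>i<2*l+1. q i < Suc b \<longleftrightarrow> i < d" using cut by blast
  have cd: "c \<le> d"
  proof (rule ccontr)
    assume "\<not> c \<le> d"
    then have "d < 2*l+1" "d < c" using c by auto
    then have "q d < a" using c by auto
    then have "q d < Suc b" using ab by auto
    then show False using d \<open>d < 2*l+1\<close> by auto
  qed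
  show False
  proof (cases "c + l < d")
    case True
    then have cl: "c \<le> l" "c < 2*l+1" "c + l < 2*l+1" using d by auto
    have "a \<le> q c" using c(2)[rule_format, OF cl(2)] by simp
    moreover have "q (c+l) \<le> b" using d(2)[rule_format, OF cl(3)] True by simp
    ultimately have "A c \<subseteq> {a..b}" using A_low[OF cl(1)] by auto
    then have "{v. v < n \<and> (v < a \<or> b < v)} \<inter> A c = {}" by auto
    then show False using all cl by blast
  next
    case False
    show False
    proof (cases "d \<le> l")
      case True
      have "d < 2*l+1" using True by auto
      then have "b < q d" using d(2)[rule_format, of d] by simp
      then have "{a..b} \<inter> A d = {}" using A_low[OF True] by auto
      then show False using all \<open>d < 2*l+1\<close> by blast
    next
      case dl: False
      show False
      proof (cases "d < 2*l+1")
        case True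
        have "b < q d" using d(2)[rule_format, of d] True by simp
        moreover have "q (d-l-1) < a" using c(2)[rule_format, of "d-l-1"] False dl True by simp
        moreover have Ad: "A d = {v. v < n \<and> (q d \<le> v \<or> v \<le> q (d-l-1))}"
          using A_high dl True by simp
        ultimately have "{a..b} \<inter> A d = {}" unfolding Ad using ab by auto
        then show False using all True by blast
      next
        case dm: False
        then have "l < c" using False d by auto
        then have "q l < a" using c(2)[rule_format, of l] by simp
        moreover have "q 0 \<le> q l" using q_le_iff by auto
        moreover have "A 0 = {q 0..q l}" using A_low[of 0] by simp
        ultimately have "{a..b} \<inter> A 0 = {}" by auto
        then show False using all by auto
      qed
    qed
  qed
qed

end

context arcs begin

theorem core:
  assumes r2: "r \<ge> 2" and cards: "\<forall>p<2*l+1. r \<le> card (A p)"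
  shows "M1_saturated n r {e. e \<subseteq> Omega n \<and> card e = r \<and> (\<forall>p<2*l+1. e \<inter> A p \<noteq> {})}"
    (is "M1_saturated n r ?H")
proof -
  have noM: "\<not> contains_M1 n ?H"
  proof
    assume "contains_M1 n ?H"
    then obtain h1 h2 u u' where h: "h1 \<in> ?H" "h2 \<in> ?H" "u \<in> Omega n" "u' \<in> Omega n" "u \<noteq> u'"
      "h1 \<subseteq> cyc_closed n u u'" "h2 \<inter> cyc_closed n u u' = {}"
      unfolding contains_M1_def by blast
    have un: "u < n" "u' < n" using h(3,4) by (auto simp: Omega_def)
    show False
    proof (cases "u \<le> u'")
      case True
      have cc: "cyc_closed n u u' = {u..u'}" using cc_lin[OF un] True by simp
      have "h2 \<subseteq> {v. v < n \<and> (v < u \<or> u' < v)}"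
        using h(2,7) unfolding cc by (auto simp: Omega_def)
      moreover have "h1 \<subseteq> {u..u'}" using h(6) cc by simp
      ultimately have "\<forall>p<2*l+1. {u..u'} \<inter> A p \<noteq> {} \<and> {v. v < n \<and> (v < u \<or> u' < v)} \<inter> A p \<noteq> {}"
        using h(1,2) by blast
      then show False using K[OF True un(2)] by blast
    next
      case False
      have cc: "cyc_closed n u u' = {v. v < n \<and> (u \<le> v \<or> v \<le> u')}" using cc_lin[OF un] False by simp
      have s2: "h2 \<subseteq> {Suc u'..u-1}"
      proof
        fix v assume v: "v \<in> h2"
        then have "v < n" using h(2) by (auto simp: Omega_def)
        moreover have "v \<notin> cyc_closed n u u'" using v h(7) by blast
        ultimately have "\<not> u \<le> v" "\<not> v \<le> u'" unfolding cc by auto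
        then show "v \<in> {Suc u'..u-1}" by auto
      qed
      have "h2 \<noteq> {}" using h(2) by auto
      then have ab: "Suc u' \<le> u - 1" using s2 by fastforce
      have "h1 \<subseteq> {v. v < n \<and> (v < Suc u' \<or> u - 1 < v)}" using h(6) cc False by auto
      then have "\<forall>p<2*l+1. {Suc u'..u-1} \<inter> A p \<noteq> {} \<and> {v. v < n \<and> (v < Suc u' \<or> u - 1 < v)} \<inter> A p \<noteq> {}"
        using h(1,2) s2 by blast
      moreover have "u - 1 < n" using un by simp
      ultimately show False using K[OF ab] by blast
    qed
  qed
  have sat: "contains_M1 n (insert e ?H)" if e: "e \<subseteq> Omega n" "card e = r" "e \<notin> ?H" for e
  proof -
    obtain p where p: "p < 2*l+1" "e \<inter> A p = {}" using e by auto
    define p2 where "p2 = (p+l) mod (2*l+1)"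
    have p2: "p2 < 2*l+1" "p2 \<noteq> p" unfolding p2_def using p l1
      by (auto simp: mod_lt2 split: if_splits)
    define x where "x = q p"
    define y where "y = q p2"
    have xy: "x \<noteq> y" unfolding x_def y_def using p2 p
      using mono[of p p2] mono[of p2 p] by (cases "p < p2") auto
    have Ap: "A p = cyc_closed n x y" unfolding A_def x_def y_def p2_def ..
    have xyA: "x \<in> A p" "y \<in> A p" unfolding Ap cyc_closed_def by auto
    have fin: "finite (A p)" using A_sub[OF p(1)] by (auto simp: Omega_def intro: finite_subset)
    have "card (A p - {x,y}) = card (A p) - 2" using xyA xy fin by (simp add: card_Diff_subset)
    then have "r - 2 \<le> card (A p - {x,y})" using cards p by (simp add: diff_le_mono)
    then obtain S where S: "S \<subseteq> A p - {x,y}" "card S = r - 2" "finite S"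
      using obtain_subset_with_card_n by blast
    define h where "h = insert x (insert y S)"
    have "x \<notin> S" "y \<notin> S" using S by auto
    then have hc: "card h = r" unfolding h_def using S xy r2 by simp
    have hA: "h \<subseteq> A p" unfolding h_def using S xyA by auto
    have hO: "h \<subseteq> Omega n" using hA A_sub p by blast
    have hH: "\<forall>j<2*l+1. h \<inter> A j \<noteq> {}"
    proof (intro allI impI)
      fix j assume "j < 2*l+1"
      then have "x \<in> A j \<or> y \<in> A j" using two p unfolding x_def y_def p2_def by blast
      then show "h \<inter> A j \<noteq> {}" unfolding h_def by auto
    qed
    have hin: "h \<in> insert e ?H" using hc hO hH by blast
    have ein: "e \<in> insert e ?H" by simp
    have xO: "x \<in> Omega n" and yO: "y \<in> Omega n" using xyA A_sub p by blast+
    have hcc: "h \<subseteq> cyc_closed n x y" using hA Ap by simp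
    have ecc: "e \<inter> cyc_closed n x y = {}" using p(2) Ap by simp
    show ?thesis unfolding contains_M1_def
      by (rule bexI[OF _ hin], rule bexI[OF _ ein], rule bexI[OF _ xO], rule bexI[OF _ yO])
        (use xy hcc ecc in blast)
  qed
  show ?thesis unfolding M1_saturated_def using noM sat by blast
qed

end

lemma evens: "filter even [0..<2*l+1] = map (\<lambda>i. 2*i) [0..<Suc l]"
proof (induction l)
  case 0 then show ?case by simp
next
  case (Suc l)
  have "[0..<2*Suc l+1] = [0..<2*l+1] @ [2*l+1, 2*l+2]" by (simp add: upt_Suc)
  then show ?case using Suc by simp
qed

lemma odds: "filter odd [0..<2*l+1] = map (\<lambda>i. 2*i+1) [0..<l]"
proof (induction l)
  case 0 then show ?case by simp
next
  case (Suc l)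
  have "[0..<2*Suc l+1] = [0..<2*l+1] @ [2*l+1, 2*l+2]" by (simp add: upt_Suc)
  then show ?case using Suc by simp
qed

definition ff :: "nat \<Rightarrow> nat \<Rightarrow> nat" where
  "ff l t = (if t \<le> l then 2*t else 2*(t-l)-1)"

lemma L_nth:
  assumes "t < 2*l+1"
  shows "(filter even [0..<2*l+1] @ filter odd [0..<2*l+1]) ! t = ff l t"
  using assms unfolding evens odds ff_def by (auto simp: nth_append)

lemma L_len: "length (filter even [0..<2*l+1] @ filter odd [0..<2*l+1]) = 2*l+1"
  unfolding evens odds by simp

lemma ff_lt: "t < 2*l+1 \<Longrightarrow> ff l t < 2*l+1"
  unfolding ff_def by auto

lemma ff_pred: "t < 2*l+1 \<Longrightarrow> (ff l t + (2*l+1) - 1) mod (2*l+1) = ff l ((t+l) mod (2*l+1))"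
  unfolding ff_def by (auto simp: mod_lt2)

lemma ff_surj: "j < 2*l+1 \<Longrightarrow> \<exists>t<2*l+1. ff l t = j"
proof -
  assume j: "j < 2*l+1"
  show ?thesis
  proof (cases "even j")
    case True
    then show ?thesis using j by (intro exI[of _ "j div 2"]) (auto simp: ff_def)
  next
    case False
    then show ?thesis using j by (intro exI[of _ "l + (j+1) div 2"]) (auto simp: ff_def elim!: oddE)
  qed
qed

lemma rot_surj: "(m::nat) > 0 \<Longrightarrow> t < m \<Longrightarrow> \<exists>p<m. (p + k) mod m = t"
proof -
  assume m: "m > 0" "t < m"
  define p where "p = (t + (m - k mod m)) mod m"
  have "(p + k) mod m = (t + (m - k mod m) + k mod m) mod m"
    unfolding p_def by (simp add: mod_add_left_eq mod_add_right_eq)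
  also have "\<dots> = (t + m) mod m"
  proof -
    have "k mod m \<le> m" using m by (simp add: less_imp_le_nat)
    then have "t + (m - k mod m) + k mod m = t + m" by simp
    then show ?thesis by (simp only:)
  qed
  also have "\<dots> = t" using m by simp
  finally have "(p + k) mod m = t" .
  moreover have "p < m" unfolding p_def using m by simp
  ultimately show ?thesis by blast
qed

theorem lemma3p3:
  fixes n r l :: nat and C :: "nat list"
  assumes "r \<ge> 2" and "l \<ge> 1"
    and "length C = 2 * l + 1"
    and "semi_valid n C"
    and "\<forall>j < length C. card (seg n C j) \<ge> r"
  shows "M1_saturated n r (H_C n r C)"
proof -
  note lenC = assms(3)
  define L where "L = map (\<lambda>j. C ! j) (filter even [0..<2*l+1] @ filter odd [0..<2*l+1])"
  have sv: "set C \<subseteq> Omega n" "cyc_ordered L"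
    using assms(4) unfolding semi_valid_def L_def lenC by auto
  obtain k where sk: "sorted_wrt (<) (rotate k L)" using sv(2) unfolding cyc_ordered_def by blast
  define q where "q i = rotate k L ! i" for i
  have lenL: "length L = 2*l+1" unfolding L_def using L_len by simp
  have Lnth: "L ! t = C ! (ff l t)" if "t < 2*l+1" for t
  proof -
    have tl: "t < length (filter even [0..<2*l+1] @ filter odd [0..<2*l+1])"
      using that L_len[of l] by simp
    show ?thesis unfolding L_def nth_map[OF tl] L_nth[OF that] ..
  qed
  have qL: "q i = C ! (ff l ((k+i) mod (2*l+1)))" if "i < 2*l+1" for i
  proof -
    have "q i = L ! ((k+i) mod (2*l+1))" unfolding q_def using nth_rotate[of i L k] that lenL by simp
    also have "\<dots> = C ! (ff l ((k+i) mod (2*l+1)))" by (rule Lnth) simp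
    finally show ?thesis .
  qed
  interpret arcs n l q
  proof
    show "1 \<le> l" by (rule assms(2))
  next
    fix i j :: nat assume "i < j" "j < 2*l+1"
    then show "q i < q j" using sk unfolding q_def sorted_wrt_iff_nth_less using lenL by simp
  next
    fix i :: nat assume i: "i < 2*l+1"
    have "ff l ((k+i) mod (2*l+1)) < length C" using ff_lt lenC by simp
    then have "q i \<in> set C" using qL[OF i] by simp
    then show "q i < n" using sv(1) by (auto simp: Omega_def)
  qed
  have key: "seg n C (ff l ((k+p) mod (2*l+1))) = A p" if p: "p < 2*l+1" for p
  proof -
    define t where "t = (k+p) mod (2*l+1)"
    have t: "t < 2*l+1" unfolding t_def by simp
    have e1: "C ! ff l t = q p" using qL[OF p] unfolding t_def by simp
    have e2: "(ff l t + length C - 1) mod length C = ff l ((t+l) mod (2*l+1))"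
      using ff_pred[OF t] lenC by simp
    have e3: "(k + (p+l) mod (2*l+1)) mod (2*l+1) = (t + l) mod (2*l+1)"
      unfolding t_def by (simp add: mod_add_right_eq mod_add_left_eq add.assoc)
    have e4: "q ((p+l) mod (2*l+1)) = C ! ff l ((t+l) mod (2*l+1))"
      using qL[of "(p+l) mod (2*l+1)"] e3 by simp
    show ?thesis unfolding seg_def A_def t_def[symmetric] e1 e2 e4 ..
  qed
  have segA: "\<exists>p<2*l+1. seg n C j = A p" if j: "j < 2*l+1" for j
  proof -
    obtain t where t: "t < 2*l+1" "ff l t = j" using ff_surj[OF j] by blast
    obtain p where p: "p < 2*l+1" "(p + k) mod (2*l+1) = t" using rot_surj[of "2*l+1" t k] t by auto
    have "seg n C j = A p" using key[OF p(1)] p(2) t(2) by (simp add: add.commute)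
    then show ?thesis using p(1) by blast
  qed
  have Aseg: "\<exists>j<2*l+1. seg n C j = A p" if p: "p < 2*l+1" for p
    using key[OF p] ff_lt[of "(k+p) mod (2*l+1)" l] by auto
  have HH: "H_C n r C = {e. e \<subseteq> Omega n \<and> card e = r \<and> (\<forall>p<2*l+1. e \<inter> A p \<noteq> {})}"
  proof -
    have "(\<forall>j<length C. e \<inter> seg n C j \<noteq> {}) \<longleftrightarrow> (\<forall>p<2*l+1. e \<inter> A p \<noteq> {})" for e
      unfolding lenC using segA Aseg by metis
    then show ?thesis unfolding H_C_def by simp
  qed
  have cards: "\<forall>p<2*l+1. r \<le> card (A p)"
    using Aseg assms(5) lenC by metis
  show ?thesis unfolding HH by (rule core[OF assms(1) cards])
qed

end
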